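(* Let $G=\bigsqcup_{i=1}^t K_{n_i}$ be a disjoint union of complete graphs with $t\ge2$ and all $n_i\ge1$. Then $\mathcal{K}^{\mathsf{TJ}}(G)=\{k:k\ge2\}$.
   Context: All graphs are finite, simple, undirected. A $k$-clique of a graph $H$ is a set of $k$ pairwise adjacent vertices. For a graph $H$ and integer $k\ge1$, the Token Jumping graph $\mathsf{TJ}_k(H)$ has as vertices the $k$-cliques of $H$, and two $k$-cliques $A,B$ are adjacent iff $|A\cap B|=k-1$. For a graph $G$, $\mathcal{K}^{\mathsf{TJ}}(G)=\{k\ge1:\ \exists H,\ \mathsf{TJ}_k(H)\cong G\}$. *)

theory Defs
  imports Main
begin

definition simple_graph :: "'a set \<Rightarrow> ('a \<Rightarrow> 'a \<Rightarrow> bool) \<Rightarrow> bool" where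
  "simple_graph V E \<longleftrightarrow> finite V \<and> (\<forall>x y. E x y \<longrightarrow> x \<in> V \<and> y \<in> V)
     \<and> (\<forall>x y. E x y \<longrightarrow> E y x) \<and> (\<forall>x. \<not> E x x)"

definition cliques :: "'a set \<Rightarrow> ('a \<Rightarrow> 'a \<Rightarrow> bool) \<Rightarrow> nat \<Rightarrow> 'a set set" where
  "cliques V E k = {C. C \<subseteq> V \<and> finite C \<and> card C = k \<and> (\<forall>x\<in>C. \<forall>y\<in>C. x \<noteq> y \<longrightarrow> E x y)}"

definition TJ_vertices :: "'a set \<Rightarrow> ('a \<Rightarrow> 'a \<Rightarrow> bool) \<Rightarrow> nat \<Rightarrow> 'a set set" where
  "TJ_vertices V E k = cliques V E k"

definition TJ_edges :: "'a set \<Rightarrow> ('a \<Rightarrow> 'a \<Rightarrow> bool) \<Rightarrow> nat \<Rightarrow> 'a set \<Rightarrow> 'a set \<Rightarrow> bool" where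
  "TJ_edges V E k A B \<longleftrightarrow> A \<in> cliques V E k \<and> B \<in> cliques V E k \<and> card (A \<inter> B) = k - 1"

definition graph_iso :: "'a set \<Rightarrow> ('a \<Rightarrow> 'a \<Rightarrow> bool) \<Rightarrow> 'b set \<Rightarrow> ('b \<Rightarrow> 'b \<Rightarrow> bool) \<Rightarrow> bool" where
  "graph_iso V1 E1 V2 E2 \<longleftrightarrow>
     (\<exists>f. bij_betw f V1 V2 \<and> (\<forall>x\<in>V1. \<forall>y\<in>V1. E1 x y \<longleftrightarrow> E2 (f x) (f y)))"

text \<open>K^TJ(G): the set of k >= 1 such that TJ_k(H) is isomorphic to G for some finite simple graph H.
  Host graphs H are taken with vertices in nat (every finite graph is isomorphic to one such).\<close>
definition K_TJ :: "'a set \<Rightarrow> ('a \<Rightarrow> 'a \<Rightarrow> bool) \<Rightarrow> nat set" where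
  "K_TJ V E = {k. k \<ge> 1 \<and> (\<exists>(HV :: nat set) HE. simple_graph HV HE \<and>
       graph_iso (TJ_vertices HV HE k) (TJ_edges HV HE k) V E)}"

text \<open>Disjoint union of complete graphs K_{n 0}, ..., K_{n (t-1)}: vertex (i,j) is the j-th vertex of the i-th clique.\<close>
definition dcliques_V :: "nat \<Rightarrow> (nat \<Rightarrow> nat) \<Rightarrow> (nat \<times> nat) set" where
  "dcliques_V t n = {(i, j). i < t \<and> j < n i}"

definition dcliques_E :: "nat \<Rightarrow> (nat \<Rightarrow> nat) \<Rightarrow> nat \<times> nat \<Rightarrow> nat \<times> nat \<Rightarrow> bool" where
  "dcliques_E t n u v \<longleftrightarrow> u \<in> dcliques_V t n \<and> v \<in> dcliques_V t n \<and> fst u = fst v \<and> snd u \<noteq> snd v"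

end

theory Submission
  imports Defs "HOL-Library.Nat_Bijection"
begin

lemma iso_sym:
  assumes "graph_iso A EA B EB" shows "graph_iso B EB A EA"
proof -
  obtain f where f: "bij_betw f A B" "\<forall>x\<in>A. \<forall>y\<in>A. EA x y \<longleftrightarrow> EB (f x) (f y)"
    using assms unfolding graph_iso_def by blast
  let ?g = "inv_into A f"
  have "bij_betw ?g B A" using f(1) by (rule bij_betw_inv_into)
  moreover have "\<forall>x\<in>B. \<forall>y\<in>B. EB x y \<longleftrightarrow> EA (?g x) (?g y)"
  proof (intro ballI)
    fix x y assume xy: "x\<in>B" "y\<in>B"
    have "?g x \<in> A" "?g y \<in> A" using xy f(1)
      by (metis bij_betw_def inv_into_into)+
    moreover have "f (?g x) = x" "f (?g y) = y" using xy f(1)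
      by (metis bij_betw_def f_inv_into_f)+
    ultimately show "EB x y \<longleftrightarrow> EA (?g x) (?g y)" using f(2) by metis
  qed
  ultimately show ?thesis unfolding graph_iso_def by blast
qed

lemma iso_trans:
  assumes "graph_iso A EA B EB" "graph_iso B EB C EC" shows "graph_iso A EA C EC"
proof -
  obtain f where f: "bij_betw f A B" "\<forall>x\<in>A. \<forall>y\<in>A. EA x y \<longleftrightarrow> EB (f x) (f y)"
    using assms(1) unfolding graph_iso_def by blast
  obtain g where g: "bij_betw g B C" "\<forall>x\<in>B. \<forall>y\<in>B. EB x y \<longleftrightarrow> EC (g x) (g y)"
    using assms(2) unfolding graph_iso_def by blast
  have "bij_betw (g \<circ> f) A C" using f(1) g(1) by (rule bij_betw_trans)
  moreover have "\<forall>x\<in>A. \<forall>y\<in>A. EA x y \<longleftrightarrow> EC ((g \<circ> f) x) ((g \<circ> f) y)"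
    using f g by (simp add: bij_betw_apply)
  ultimately show ?thesis unfolding graph_iso_def by blast
qed

lemma transfer_host:
  fixes g :: "'a \<Rightarrow> nat"
  assumes sg: "simple_graph V E" and inj: "inj_on g V"
  defines "HV \<equiv> g ` V" and "HE \<equiv> \<lambda>a b. \<exists>x\<in>V. \<exists>y\<in>V. a = g x \<and> b = g y \<and> E x y"
  shows "simple_graph HV HE"
    and "graph_iso (TJ_vertices V E k) (TJ_edges V E k) (TJ_vertices HV HE k) (TJ_edges HV HE k)"
proof -
  have s1: "finite HV" using sg unfolding simple_graph_def HV_def by simp
  have s2: "\<forall>x y. HE x y \<longrightarrow> x \<in> HV \<and> y \<in> HV" unfolding HE_def HV_def by blast
  have s3: "\<forall>x y. HE x y \<longrightarrow> HE y x"
  proof (intro allI impI)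
    fix x y assume "HE x y"
    then obtain a b where ab: "a \<in> V" "b \<in> V" "x = g a" "y = g b" "E a b" unfolding HE_def by blast
    have "E b a" using ab(5) sg unfolding simple_graph_def by blast
    then show "HE y x" using ab unfolding HE_def by blast
  qed
  have s4: "\<forall>x. \<not> HE x x"
  proof (intro allI notI)
    fix x assume "HE x x"
    then obtain a b where ab: "a \<in> V" "b \<in> V" "x = g a" "x = g b" "E a b" unfolding HE_def by blast
    have "a = b" using ab inj by (metis inj_onD)
    then show False using ab(5) sg unfolding simple_graph_def by blast
  qed
  show "simple_graph HV HE" unfolding simple_graph_def using s1 s2 s3 s4 by blast
next
  have cl: "cliques HV HE k = (\<lambda>C. g ` C) ` cliques V E k"
  proof (intro equalityI subsetI)
    fix C' assume C': "C' \<in> cliques HV HE k"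
    let ?C = "V \<inter> g -` C'"
    have sub: "C' \<subseteq> g ` V" using C' unfolding cliques_def HV_def by auto
    have im: "g ` ?C = C'" using sub by auto
    have "finite ?C" using sg unfolding simple_graph_def by auto
    moreover have "card ?C = k"
      using C' im card_image[OF inj_on_subset[OF inj, of ?C]] unfolding cliques_def by auto
    moreover have "\<forall>x\<in>?C. \<forall>y\<in>?C. x \<noteq> y \<longrightarrow> E x y"
    proof (intro ballI impI)
      fix x y assume xy: "x \<in> ?C" "y \<in> ?C" "x \<noteq> y"
      then have "g x \<noteq> g y" using inj by (auto dest: inj_onD)
      then have "HE (g x) (g y)" using xy C' unfolding cliques_def by auto
      then obtain x0 y0 where "x0 \<in> V" "y0 \<in> V" "g x = g x0" "g y = g y0" "E x0 y0"
        unfolding HE_def by blast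
      then show "E x y" using xy inj by (metis IntD1 inj_onD)
    qed
    ultimately have "?C \<in> cliques V E k" unfolding cliques_def by auto
    then show "C' \<in> (\<lambda>C. g ` C) ` cliques V E k" using im by blast
  next
    fix C' assume "C' \<in> (\<lambda>C. g ` C) ` cliques V E k"
    then obtain C where C: "C \<in> cliques V E k" and CC: "C' = g ` C" by blast
    have CV: "C \<subseteq> V" using C unfolding cliques_def by auto
    have "card C' = k" using C CC card_image[OF inj_on_subset[OF inj CV]] unfolding cliques_def by auto
    moreover have "C' \<subseteq> HV" using CV CC HV_def by auto
    moreover have "finite C'" using C CC unfolding cliques_def by auto
    moreover have "\<forall>x\<in>C'. \<forall>y\<in>C'. x \<noteq> y \<longrightarrow> HE x y"
    proof (intro ballI impI)
      fix x y assume xy: "x \<in> C'" "y \<in> C'" "x \<noteq> y"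
      obtain a where a: "a \<in> C" "x = g a" using xy(1) CC by blast
      obtain b where b: "b \<in> C" "y = g b" using xy(2) CC by blast
      have "a \<noteq> b" using a b xy(3) by blast
      then have "E a b" using a(1) b(1) C unfolding cliques_def by blast
      then show "HE x y" unfolding HE_def using a b CV by blast
    qed
    ultimately show "C' \<in> cliques HV HE k" unfolding cliques_def by auto
  qed
  have injh: "inj_on (\<lambda>C. g ` C) (cliques V E k)"
  proof (rule inj_onI)
    fix A B assume "A \<in> cliques V E k" "B \<in> cliques V E k" "g ` A = g ` B"
    then show "A = B" using inj_on_image_eq_iff[OF inj] unfolding cliques_def by auto
  qed
  have "bij_betw (\<lambda>C. g ` C) (TJ_vertices V E k) (TJ_vertices HV HE k)"
    unfolding TJ_vertices_def bij_betw_def using cl injh by auto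
  moreover have "\<forall>A\<in>TJ_vertices V E k. \<forall>B\<in>TJ_vertices V E k.
      TJ_edges V E k A B \<longleftrightarrow> TJ_edges HV HE k (g ` A) (g ` B)"
  proof (intro ballI)
    fix A B assume A: "A \<in> TJ_vertices V E k" and B: "B \<in> TJ_vertices V E k"
    have AV: "A \<subseteq> V" and BV: "B \<subseteq> V" using A B unfolding TJ_vertices_def cliques_def by auto
    have "g ` A \<inter> g ` B = g ` (A \<inter> B)" using inj_on_image_Int[OF inj AV BV] by simp
    then have "card (g ` A \<inter> g ` B) = card (A \<inter> B)"
      using card_image[OF inj_on_subset[OF inj, of "A \<inter> B"]] AV by auto
    then show "TJ_edges V E k A B \<longleftrightarrow> TJ_edges HV HE k (g ` A) (g ` B)"
      using A B cl unfolding TJ_edges_def TJ_vertices_def by auto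
  qed
  ultimately show "graph_iso (TJ_vertices V E k) (TJ_edges V E k) (TJ_vertices HV HE k) (TJ_edges HV HE k)"
    unfolding graph_iso_def by blast
qed


definition hV :: "nat \<Rightarrow> (nat \<Rightarrow> nat) \<Rightarrow> nat \<Rightarrow> (nat \<times> nat) set" where
  "hV t n k = {(i, j). i < t \<and> j < k - 1 + n i}"

definition hE :: "nat \<Rightarrow> (nat \<Rightarrow> nat) \<Rightarrow> nat \<Rightarrow> nat \<times> nat \<Rightarrow> nat \<times> nat \<Rightarrow> bool" where
  "hE t n k u v \<longleftrightarrow> u \<in> hV t n k \<and> v \<in> hV t n k \<and> fst u = fst v \<and> u \<noteq> v
     \<and> (snd u < k - 1 \<or> snd v < k - 1)"

definition FF :: "nat \<Rightarrow> nat \<times> nat \<Rightarrow> (nat \<times> nat) set" where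
  "FF k p = {fst p} \<times> ({..<k - 1} \<union> {k - 1 + snd p})"

lemma hV_finite: "finite (hV t n k)"
proof -
  have "hV t n k = Sigma {..<t} (\<lambda>i. {..<k - 1 + n i})" unfolding hV_def by auto
  then show ?thesis by simp
qed

lemma hsg: "simple_graph (hV t n k) (hE t n k)"
  unfolding simple_graph_def using hV_finite by (auto simp: hE_def)

lemma card_FF: "card (FF k p) = k" if "k \<ge> 1"
proof -
  have "card ({..<k - 1} \<union> {k - 1 + snd p}) = Suc (k - 1)" by simp
  then show ?thesis unfolding FF_def using that by (simp add: card_cartesian_product_singleton)
qed

lemma FF_clique:
  assumes "k \<ge> 2" "p \<in> dcliques_V t n"
  shows "FF k p \<in> cliques (hV t n k) (hE t n k) k"
proof -
  have sub: "FF k p \<subseteq> hV t n k" using assms unfolding FF_def hV_def dcliques_V_def by auto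
  have "\<forall>x\<in>FF k p. \<forall>y\<in>FF k p. x \<noteq> y \<longrightarrow> hE t n k x y"
    using sub unfolding hE_def FF_def by auto
  then show ?thesis using sub card_FF[of k p] assms(1) unfolding cliques_def FF_def by auto
qed

lemma clique_FF:
  assumes k: "k \<ge> 2" and C: "C \<in> cliques (hV t n k) (hE t n k) k"
  shows "\<exists>p\<in>dcliques_V t n. C = FF k p"
proof -
  have fin: "finite C" and cardC: "card C = k" and CV: "C \<subseteq> hV t n k"
    and adj: "\<forall>x\<in>C. \<forall>y\<in>C. x \<noteq> y \<longrightarrow> hE t n k x y"
    using C unfolding cliques_def by auto
  have "C \<noteq> {}" using cardC k by auto
  then obtain c where c: "c \<in> C" by blast
  define i where "i = fst c"
  have alli: "\<forall>x\<in>C. fst x = i"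
  proof
    fix x assume x: "x \<in> C"
    show "fst x = i"
    proof (cases "x = c")
      case False
      then have "c \<noteq> x" by simp
      then have "hE t n k c x" using adj[rule_format, OF c x] by simp
      then show ?thesis unfolding i_def hE_def by simp
    qed (simp add: i_def)
  qed
  define S where "S = {i} \<times> {..<k - 1}"
  have le1: "\<forall>a1\<in>C - S. \<forall>a2\<in>C - S. a1 = a2"
  proof (intro ballI)
    fix a1 a2 assume a: "a1 \<in> C - S" "a2 \<in> C - S"
    have "fst a1 = i" "fst a2 = i" using a alli by auto
    then have "snd a1 \<ge> k - 1" "snd a2 \<ge> k - 1" using a unfolding S_def
      by (metis DiffD2 SigmaI lessThan_iff not_le prod.collapse singletonI)+
    show "a1 = a2"
    proof (rule ccontr)
      assume "a1 \<noteq> a2"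
      then have "hE t n k a1 a2" using a adj by blast
      then show False using \<open>snd a1 \<ge> k - 1\<close> \<open>snd a2 \<ge> k - 1\<close> unfolding hE_def by auto
    qed
  qed
  have c1: "card (C - S) \<le> 1" using le1 fin card_le_Suc0_iff_eq[of "C - S"] by auto
  have finS: "finite S" unfolding S_def by simp
  have cS: "card S = k - 1" unfolding S_def by (simp add: card_cartesian_product_singleton)
  have c2: "card (C \<inter> S) \<le> k - 1" using cS finS card_mono[of S "C \<inter> S"] by auto
  have "card ((C \<inter> S) \<union> (C - S)) = card (C \<inter> S) + card (C - S)"
    using fin by (intro card_Un_disjoint) auto
  moreover have "(C \<inter> S) \<union> (C - S) = C" by auto
  ultimately have "card (C \<inter> S) + card (C - S) = k" using cardC by simp
  then have "card (C - S) = 1" and eqS: "card (C \<inter> S) = k - 1" using c1 c2 k by linarith+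
  then obtain x where x: "C - S = {x}" using card_1_singletonE by blast
  have SC: "S \<subseteq> C" using card_subset_eq[OF finS, of "C \<inter> S"] eqS cS by auto
  have CSx: "C = S \<union> {x}" using x SC by auto
  have xC: "x \<in> C" using x by auto
  obtain m where xm: "x = (i, m)" using alli xC by (metis prod.collapse)
  have "x \<notin> S" using x by auto
  then have "m \<ge> k - 1" using xm unfolding S_def by auto
  moreover have "i < t" "m < k - 1 + n i" using xm xC CV unfolding hV_def by auto
  ultimately have pin: "(i, m - (k - 1)) \<in> dcliques_V t n" unfolding dcliques_V_def by auto
  have "FF k (i, m - (k - 1)) = C" unfolding FF_def CSx S_def xm using \<open>m \<ge> k - 1\<close> by auto
  then show ?thesis using pin by metis
qed

lemma FF_edge:
  assumes k: "k \<ge> 2" and p: "p \<in> dcliques_V t n" and q: "q \<in> dcliques_V t n"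
  shows "card (FF k p \<inter> FF k q) = k - 1 \<longleftrightarrow> dcliques_E t n p q"
proof (cases "fst p = fst q")
  case False
  then have "FF k p \<inter> FF k q = {}" unfolding FF_def by auto
  then show ?thesis using False k unfolding dcliques_E_def by auto
next
  case True
  show ?thesis
  proof (cases "snd p = snd q")
    case True2: True
    then have "p = q" using True by (simp add: prod_eq_iff)
    then show ?thesis using card_FF[of k p] k unfolding dcliques_E_def by auto
  next
    case False
    then have "FF k p \<inter> FF k q = {fst p} \<times> {..<k - 1}" using True unfolding FF_def by auto
    then have "card (FF k p \<inter> FF k q) = k - 1" by (simp add: card_cartesian_product_singleton)
    then show ?thesis using True False p q unfolding dcliques_E_def by auto
  qed
qed

lemma FF_inj: assumes "k \<ge> 2" shows "inj_on (FF k) (dcliques_V t n)"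
proof (rule inj_onI)
  fix p q assume eq: "FF k p = FF k q"
  have "(fst p, k - 1 + snd p) \<in> FF k p" by (simp add: FF_def)
  then have "(fst p, k - 1 + snd p) \<in> FF k q" using eq by simp
  then have "fst p = fst q" "snd p = snd q" unfolding FF_def by auto
  then show "p = q" by (simp add: prod_eq_iff)
qed

lemma main_iso:
  assumes k: "k \<ge> 2"
  shows "graph_iso (dcliques_V t n) (dcliques_E t n)
     (TJ_vertices (hV t n k) (hE t n k) k) (TJ_edges (hV t n k) (hE t n k) k)"
proof -
  have "FF k ` dcliques_V t n = cliques (hV t n k) (hE t n k) k"
    using FF_clique[OF k] clique_FF[OF k] by blast
  then have "bij_betw (FF k) (dcliques_V t n) (TJ_vertices (hV t n k) (hE t n k) k)"
    unfolding bij_betw_def TJ_vertices_def using FF_inj[OF k] by auto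
  moreover have "\<forall>p\<in>dcliques_V t n. \<forall>q\<in>dcliques_V t n. dcliques_E t n p q \<longleftrightarrow>
     TJ_edges (hV t n k) (hE t n k) k (FF k p) (FF k q)"
    using FF_edge[OF k] FF_clique[OF k] unfolding TJ_edges_def by blast
  ultimately show ?thesis unfolding graph_iso_def by blast
qed

theorem proposition4p9:
  fixes t :: nat and n :: "nat \<Rightarrow> nat"
  assumes "t \<ge> 2" and "\<forall>i<t. n i \<ge> 1"
  shows "K_TJ (dcliques_V t n) (dcliques_E t n) = {k. k \<ge> 2}"
proof (intro equalityI subsetI)
  fix k assume "k \<in> K_TJ (dcliques_V t n) (dcliques_E t n)"
  then obtain HV :: "nat set" and HE where k1: "k \<ge> 1" and
    iso: "graph_iso (TJ_vertices HV HE k) (TJ_edges HV HE k) (dcliques_V t n) (dcliques_E t n)"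
    unfolding K_TJ_def by blast
  show "k \<in> {k. k \<ge> 2}"
  proof (rule ccontr)
    assume "k \<notin> {k. k \<ge> 2}"
    then have k: "k = 1" using k1 by auto
    obtain f where f: "bij_betw f (TJ_vertices HV HE k) (dcliques_V t n)"
      "\<forall>x\<in>TJ_vertices HV HE k. \<forall>y\<in>TJ_vertices HV HE k.
          TJ_edges HV HE k x y \<longleftrightarrow> dcliques_E t n (f x) (f y)"
      using iso unfolding graph_iso_def by blast
    have a: "(0, 0) \<in> dcliques_V t n" "(1, 0) \<in> dcliques_V t n"
      using assms(1) assms(2)[rule_format, of 0] assms(2)[rule_format, of 1]
      unfolding dcliques_V_def by auto
    obtain A where A: "A \<in> TJ_vertices HV HE k" "f A = (0, 0)"
      using a(1) f(1) unfolding bij_betw_def by (metis imageE)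
    obtain B where B: "B \<in> TJ_vertices HV HE k" "f B = (1, 0)"
      using a(2) f(1) unfolding bij_betw_def by (metis imageE)
    have "A \<noteq> B" using A B by auto
    moreover obtain a where "A = {a}" using A k unfolding TJ_vertices_def cliques_def
      by (auto simp: card_1_singleton_iff)
    moreover obtain b where "B = {b}" using B k unfolding TJ_vertices_def cliques_def
      by (auto simp: card_1_singleton_iff)
    ultimately have "card (A \<inter> B) = k - 1" using k by auto
    then have "TJ_edges HV HE k A B" using A B unfolding TJ_edges_def TJ_vertices_def by auto
    then have "dcliques_E t n (0, 0) (1, 0)" using f(2) A B by metis
    then show False unfolding dcliques_E_def by auto
  qed
next
  fix k assume "k \<in> {k. (k::nat) \<ge> 2}"
  then have k: "k \<ge> 2" by auto
  let ?V = "hV t n k" and ?E = "hE t n k"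
  let ?HV = "prod_encode ` ?V"
  let ?HE = "\<lambda>a b. \<exists>x\<in>?V. \<exists>y\<in>?V. a = prod_encode x \<and> b = prod_encode y \<and> ?E x y"
  have inj: "inj_on prod_encode ?V" using inj_prod_encode by (metis inj_on_subset subset_UNIV)
  have "simple_graph ?HV ?HE" using transfer_host(1)[OF hsg inj] .
  moreover have "graph_iso (TJ_vertices ?HV ?HE k) (TJ_edges ?HV ?HE k) (dcliques_V t n) (dcliques_E t n)"
    using iso_sym[OF iso_trans[OF main_iso[OF k] transfer_host(2)[OF hsg inj]]] .
  ultimately show "k \<in> K_TJ (dcliques_V t n) (dcliques_E t n)"
    unfolding K_TJ_def using k by auto
qed

end
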